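(* The following two assertions are equivalent. (i) (Gleason's theorem for $\mathbb{R}^3$.) For every state $P$ on $\mathbb{R}^3$ there is a symmetric positive semidefinite real $3\times 3$ matrix $W$ with trace $1$ such that $P(x)=\langle \vec{x},W\vec{x}\rangle$ for every atom $x$ of $L(\mathbb{R}^3)$, where $\vec{x}$ is a unit vector along $x$. (ii) Every bounded frame function $f$ on the set of all atoms of $L(\mathbb{R}^3)$ which satisfies $f(e_i)=0$ for $1\le i\le 3$ and $f(b_{ij})=0$ for $1\le i<j\le 3$ is identically zero.
   Context: $L(\mathbb{R}^3)$ denotes the lattice of subspaces of $\mathbb{R}^3$ (with its standard inner product); its atoms are the one-dimensional subspaces (rays). For an atom $x$, $\vec{x}$ denotes a unit vector spanning $x$. A frame function on a set $\Gamma$ of atoms of $L(\mathbb{R}^3)$ is a real function $f$ on $\Gamma$ for which there is a constant $C$ such that $f(x)+f(x')+f(x'')=C$ for every triple $x,x',x''$ of pairwise orthogonal atoms in $\Gamma$. A state on $\mathbb{R}^3$ is a function $P$ from the atoms of $L(\mathbb{R}^3)$ to $[0,\infty)$ such that $P(x)+P(x')+P(x'')=1$ for every triple of pairwise orthogonal atoms. Let $\vec{e_1}=(1,0,0)$, $\vec{e_2}=(0,1,0)$, $\vec{e_3}=(0,0,1)$ and $\vec{b_{ij}}=\frac{1}{\sqrt{2}}(\vec{e_i}+\vec{e_j})$ for $1\le i<j\le 3$. Let $e_i$ and $b_{ij}$ denote the rays spanned by these vectors. *)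

theory Defs
  imports "HOL-Analysis.Analysis"
begin

definition atoms3 :: "(real^3) set set" where
  "atoms3 = {span {v} | v :: real^3. v \<noteq> 0}"

definition orth_sub :: "(real^3) set \<Rightarrow> (real^3) set \<Rightarrow> bool" where
  "orth_sub x y \<longleftrightarrow> (\<forall>u\<in>x. \<forall>w\<in>y. inner u w = 0)"

definition orth_triple :: "(real^3) set \<Rightarrow> (real^3) set \<Rightarrow> (real^3) set \<Rightarrow> bool" where
  "orth_triple x y z \<longleftrightarrow> x \<in> atoms3 \<and> y \<in> atoms3 \<and> z \<in> atoms3 \<and>
     orth_sub x y \<and> orth_sub x z \<and> orth_sub y z"

definition frame_function :: "(real^3) set set \<Rightarrow> ((real^3) set \<Rightarrow> real) \<Rightarrow> bool" where
  "frame_function \<Gamma> f \<longleftrightarrow> (\<exists>C. \<forall>x y z. x \<in> \<Gamma> \<and> y \<in> \<Gamma> \<and> z \<in> \<Gamma> \<and> orth_triple x y z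
        \<longrightarrow> f x + f y + f z = C)"

definition is_state :: "((real^3) set \<Rightarrow> real) \<Rightarrow> bool" where
  "is_state P \<longleftrightarrow> (\<forall>x\<in>atoms3. 0 \<le> P x) \<and>
     (\<forall>x y z. orth_triple x y z \<longrightarrow> P x + P y + P z = 1)"

definition e1 :: "real^3" where "e1 = vector [1, 0, 0]"
definition e2 :: "real^3" where "e2 = vector [0, 1, 0]"
definition e3 :: "real^3" where "e3 = vector [0, 0, 1]"
definition b12 :: "real^3" where "b12 = (1 / sqrt 2) *\<^sub>R (e1 + e2)"
definition b13 :: "real^3" where "b13 = (1 / sqrt 2) *\<^sub>R (e1 + e3)"
definition b23 :: "real^3" where "b23 = (1 / sqrt 2) *\<^sub>R (e2 + e3)"

definition gleason_R3 :: bool where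
  "gleason_R3 \<longleftrightarrow> (\<forall>P. is_state P \<longrightarrow>
     (\<exists>W :: real^3^3. transpose W = W \<and> (\<forall>v. 0 \<le> inner v (W *v v)) \<and> trace W = 1 \<and>
        (\<forall>x\<in>atoms3. \<forall>u. u \<in> x \<and> norm u = 1 \<longrightarrow> P x = inner u (W *v u))))"

definition frame_vanishing_R3 :: bool where
  "frame_vanishing_R3 \<longleftrightarrow> (\<forall>f. frame_function atoms3 f \<and>
     (\<exists>B. \<forall>x\<in>atoms3. \<bar>f x\<bar> \<le> B) \<and>
     f (span {e1}) = 0 \<and> f (span {e2}) = 0 \<and> f (span {e3}) = 0 \<and>
     f (span {b12}) = 0 \<and> f (span {b13}) = 0 \<and> f (span {b23}) = 0
     \<longrightarrow> (\<forall>x\<in>atoms3. f x = 0))"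

end

theory Submission
  imports Defs
begin

definition Q :: "real^3^3 \<Rightarrow> real^3 \<Rightarrow> real" where "Q A u = inner u (A *v u)"

lemma Q_expand: "Q A u = (\<Sum>i\<in>UNIV. \<Sum>j\<in>UNIV. u$i * A$i$j * u$j)"
  by (simp add: Q_def inner_vec_def matrix_vector_mult_def sum_distrib_left mult.assoc)

lemma Q_scale: "Q A (c *\<^sub>R u) = c^2 * Q A u"
  by (simp add: Q_expand sum_distrib_left power2_eq_square mult_ac)

lemma orth_sub_span: "orth_sub (span{a}) (span{b}) \<longleftrightarrow> inner a b = 0"
  unfolding orth_sub_def span_singleton by auto

lemma atom_span: "v \<noteq> 0 \<Longrightarrow> span{v} \<in> atoms3"
  unfolding atoms3_def by auto

lemma atom_unit: assumes "x \<in> atoms3" shows "\<exists>u. x = span{u} \<and> norm u = 1"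
proof -
  obtain v where v: "v \<noteq> 0" "x = span{v}" using assms unfolding atoms3_def by auto
  let ?u = "(1/norm v) *\<^sub>R v"
  have "span{?u} = span{v}" unfolding span_singleton using v(1)
    apply (auto simp: image_def)
    apply (rule_tac x="xa * norm v" in exI) by simp
  then show ?thesis using v by (intro exI[of _ ?u]) auto
qed

lemma unit_in_span: assumes "u \<in> span{v}" "norm u = 1" "norm v = 1"
  shows "u = v \<or> u = - v"
proof -
  obtain c where c: "u = c *\<^sub>R v" using assms(1) unfolding span_singleton by auto
  then have "\<bar>c\<bar> = 1" using assms by simp
  then show ?thesis using c by (cases "c \<ge> 0") auto
qed

lemma Q_atom_indep: assumes "x \<in> atoms3" "u \<in> x" "norm u = 1" "u' \<in> x" "norm u' = 1"
  shows "Q A u = Q A u'"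
proof -
  obtain w where w: "x = span{w}" "norm w = 1" using atom_unit assms(1) by blast
  have "Q A u = Q A w" using unit_in_span[of u w] assms w Q_scale[of A "-1" w] by auto
  moreover have "Q A u' = Q A w" using unit_in_span[of u' w] assms w Q_scale[of A "-1" w] by auto
  ultimately show ?thesis by simp
qed

lemma atom_in_triple: assumes "x \<in> atoms3" shows "\<exists>y z. orth_triple x y z"
proof -
  obtain v where v: "v \<noteq> 0" "x = span{v}" using assms unfolding atoms3_def by auto
  have "dim {v} < DIM(real^3)" using dim_le_card[of "{v}"] by simp
  then obtain w where w: "w \<noteq> 0" "\<And>y. y \<in> span {v} \<Longrightarrow> orthogonal w y"
    using orthogonal_to_subspace_exists by blast
  have "dim {v,w} \<le> card {v,w}" by (rule dim_le_card') simp
  moreover have "card {v,w} \<le> 2" by (cases "v = w") auto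
  ultimately have "dim {v,w} < DIM(real^3)" by simp
  then obtain z where z: "z \<noteq> 0" "\<And>y. y \<in> span {v,w} \<Longrightarrow> orthogonal z y"
    using orthogonal_to_subspace_exists by blast
  have "inner v w = 0" using w(2)[of v] by (simp add: span_base orthogonal_def inner_commute)
  moreover have "inner v z = 0" using z(2)[of v] by (simp add: span_base orthogonal_def inner_commute)
  moreover have "inner w z = 0" using z(2)[of w] by (simp add: span_base orthogonal_def inner_commute)
  ultimately have "orth_triple x (span{w}) (span{z})"
    unfolding orth_triple_def using v w z by (simp add: atom_span orth_sub_span)
  then show ?thesis by blast
qed

lemma trace_lemma:
  assumes "norm u1 = 1" "norm u2 = 1" "norm u3 = 1" "inner u1 u2 = 0" "inner u1 u3 = 0" "inner u2 u3 = 0"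
  shows "Q A u1 + Q A u2 + Q A u3 = trace A"
proof -
  define U :: "real^3^3" where "U = vector [u1, u2, u3]"
  have iu: "inner u u = 1" if "norm u = 1" for u :: "real^3"
    using that by (simp add: norm_eq_sqrt_inner)
  have "U ** transpose U = mat 1"
  proof -
    have "(U ** transpose U)$k$l = inner (U$k) (U$l)" for k l
      by (simp add: matrix_matrix_mult_def transpose_def inner_vec_def)
    then show ?thesis using assms iu
      by (simp add: vec_eq_iff forall_3 U_def mat_def inner_commute)
  qed
  then have "transpose U ** U = mat 1" using matrix_left_right_inverse by blast
  then have S: "(\<Sum>k\<in>UNIV. U$k$i * U$k$j) = (if i = j then 1 else 0)" for i j
  proof -
    have "(transpose U ** U)$i$j = (mat 1 :: real^3^3)$i$j" using \<open>transpose U ** U = mat 1\<close> by simp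
    then show ?thesis by (simp add: matrix_matrix_mult_def transpose_def mat_def)
  qed
  have "Q A u1 + Q A u2 + Q A u3 = (\<Sum>k\<in>UNIV. Q A (U$k))"
    by (simp add: sum_3 U_def)
  also have "\<dots> = (\<Sum>k\<in>UNIV. \<Sum>i\<in>UNIV. \<Sum>j\<in>UNIV. A$i$j * (U$k$i * U$k$j))"
    by (simp add: Q_expand mult_ac)
  also have "\<dots> = (\<Sum>i\<in>UNIV. \<Sum>k\<in>UNIV. \<Sum>j\<in>UNIV. A$i$j * (U$k$i * U$k$j))"
    by (rule sum.swap)
  also have "\<dots> = (\<Sum>i\<in>UNIV. \<Sum>j\<in>UNIV. \<Sum>k\<in>UNIV. A$i$j * (U$k$i * U$k$j))"
    by (rule sum.cong[OF refl], rule sum.swap)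
  also have "\<dots> = (\<Sum>i\<in>UNIV. \<Sum>j\<in>UNIV. A$i$j * (\<Sum>k\<in>UNIV. U$k$i * U$k$j))"
    by (simp add: sum_distrib_left)
  also have "\<dots> = (\<Sum>i\<in>UNIV. A$i$i)"
    by (simp add: S if_distrib sum.delta sum.delta' cong: if_cong)
  finally show ?thesis by (simp add: trace_def)
qed

lemma Qe: "Q A e1 = A$1$1" "Q A e2 = A$2$2" "Q A e3 = A$3$3"
  by (simp_all add: Q_expand sum_3 e1_def e2_def e3_def)

lemma Qb: "Q A b12 = (A$1$1 + A$2$2 + A$1$2 + A$2$1)/2"
  "Q A b13 = (A$1$1 + A$3$3 + A$1$3 + A$3$1)/2"
  "Q A b23 = (A$2$2 + A$3$3 + A$2$3 + A$3$2)/2"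
proof -
  have s: "(1/sqrt 2) * (1/sqrt 2) = (1/2::real)" by simp
  have c: "b12$1 = 1/sqrt 2" "b12$2 = 1/sqrt 2" "b12$3 = 0"
    "b13$1 = 1/sqrt 2" "b13$2 = 0" "b13$3 = 1/sqrt 2"
    "b23$1 = 0" "b23$2 = 1/sqrt 2" "b23$3 = 1/sqrt 2"
    by (simp_all add: b12_def b13_def b23_def e1_def e2_def e3_def)
  have "Q A b12 = ((1/sqrt 2) * (1/sqrt 2)) * (A$1$1 + A$2$2 + A$1$2 + A$2$1)"
    "Q A b13 = ((1/sqrt 2) * (1/sqrt 2)) * (A$1$1 + A$3$3 + A$1$3 + A$3$1)"
    "Q A b23 = ((1/sqrt 2) * (1/sqrt 2)) * (A$2$2 + A$3$3 + A$2$3 + A$3$2)"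
    unfolding Q_expand sum_3 c by (simp_all only: mult_zero_left mult_zero_right add_0_left add_0_right, argo+)
  then show "Q A b12 = (A$1$1 + A$2$2 + A$1$2 + A$2$1)/2"
    "Q A b13 = (A$1$1 + A$3$3 + A$1$3 + A$3$1)/2"
    "Q A b23 = (A$2$2 + A$3$3 + A$2$3 + A$3$2)/2"
    unfolding s by simp_all
qed

lemma unit_eq: "norm (u::real^3) = 1 \<Longrightarrow> u$1^2 + u$2^2 + u$3^2 = 1"
proof -
  assume "norm u = 1"
  then have "inner u u = 1" by (simp add: norm_eq_1)
  then show ?thesis by (simp add: inner_vec_def sum_3 power2_eq_square)
qed

lemma norm_from_inner: "inner (u::real^3) u = 1 \<Longrightarrow> norm u = 1"
  by (simp add: norm_eq_sqrt_inner)

lemma norms: "norm e1 = 1" "norm e2 = 1" "norm e3 = 1" "norm b12 = 1" "norm b13 = 1" "norm b23 = 1"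
  by (rule norm_from_inner, simp add: inner_vec_def sum_3 b12_def b13_def b23_def e1_def e2_def e3_def)+

lemma e_triple: "orth_triple (span{e1}) (span{e2}) (span{e3})"
proof -
  have "e1 \<noteq> 0" "e2 \<noteq> 0" "e3 \<noteq> 0" using norms by auto
  moreover have "inner e1 e2 = 0" "inner e1 e3 = 0" "inner e2 e3 = 0"
    by (simp_all add: inner_vec_def sum_3 e1_def e2_def e3_def)
  ultimately show ?thesis unfolding orth_triple_def by (simp add: atom_span orth_sub_span)
qed

lemma Q_bound: assumes "norm u = 1" shows "\<bar>Q A u\<bar> \<le> (\<Sum>i\<in>UNIV. \<Sum>j\<in>UNIV. \<bar>A$i$j\<bar>)"
proof -
  have t: "\<bar>u$i * A$i$j * u$j\<bar> \<le> \<bar>A$i$j\<bar>" for i j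
  proof -
    have "\<bar>u$i\<bar> \<le> 1" "\<bar>u$j\<bar> \<le> 1" using component_le_norm_cart[of u] assms by auto
    then have "\<bar>u$i\<bar> * \<bar>u$j\<bar> \<le> 1" by (simp add: mult_le_one)
    then have "\<bar>A$i$j\<bar> * (\<bar>u$i\<bar> * \<bar>u$j\<bar>) \<le> \<bar>A$i$j\<bar> * 1"
      by (intro mult_left_mono) auto
    then show ?thesis by (simp add: abs_mult mult_ac)
  qed
  have "\<bar>Q A u\<bar> \<le> (\<Sum>i\<in>UNIV. \<bar>\<Sum>j\<in>UNIV. u$i * A$i$j * u$j\<bar>)"
    unfolding Q_expand by (rule sum_abs)
  also have "\<dots> \<le> (\<Sum>i\<in>UNIV. \<Sum>j\<in>UNIV. \<bar>u$i * A$i$j * u$j\<bar>)"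
    by (intro sum_mono sum_abs)
  also have "\<dots> \<le> (\<Sum>i\<in>UNIV. \<Sum>j\<in>UNIV. \<bar>A$i$j\<bar>)"
    by (intro sum_mono t)
  finally show ?thesis .
qed

lemma triple_atoms: "orth_triple x y z \<Longrightarrow> x \<in> atoms3 \<and> y \<in> atoms3 \<and> z \<in> atoms3"
  by (simp add: orth_triple_def)

lemma triple_units: assumes "orth_triple x y z"
  obtains u1 u2 u3 where "x = span{u1}" "y = span{u2}" "z = span{u3}" "norm u1 = 1" "norm u2 = 1" "norm u3 = 1"
    "inner u1 u2 = 0" "inner u1 u3 = 0" "inner u2 u3 = 0"
proof -
  obtain u1 where 1: "x = span{u1}" "norm u1 = 1" using atom_unit assms triple_atoms by blast
  obtain u2 where 2: "y = span{u2}" "norm u2 = 1" using atom_unit assms triple_atoms by blast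
  obtain u3 where 3: "z = span{u3}" "norm u3 = 1" using atom_unit assms triple_atoms by blast
  show ?thesis using that 1 2 3 assms unfolding orth_triple_def by (simp add: orth_sub_span)
qed

lemma state_le1: assumes "is_state P" "x \<in> atoms3" shows "0 \<le> P x \<and> P x \<le> 1"
proof -
  obtain y z where t: "orth_triple x y z" using atom_in_triple[OF assms(2)] by blast
  have a: "x \<in> atoms3" "y \<in> atoms3" "z \<in> atoms3" using triple_atoms[OF t] by auto
  have "P x + P y + P z = 1" using assms(1) t unfolding is_state_def by blast
  moreover have "0 \<le> P x" "0 \<le> P y" "0 \<le> P z" using assms(1) a unfolding is_state_def by auto
  ultimately show ?thesis by linarith
qed

lemma dir1: assumes G: gleason_R3 shows frame_vanishing_R3
  unfolding frame_vanishing_R3_def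
proof (intro allI impI)
  fix f
  assume H: "frame_function atoms3 f \<and> (\<exists>B. \<forall>x\<in>atoms3. \<bar>f x\<bar> \<le> B) \<and>
     f (span {e1}) = 0 \<and> f (span {e2}) = 0 \<and> f (span {e3}) = 0 \<and>
     f (span {b12}) = 0 \<and> f (span {b13}) = 0 \<and> f (span {b23}) = 0"
  then have "frame_function atoms3 f" by blast
  then obtain C where C0: "\<forall>x y z. x \<in> atoms3 \<and> y \<in> atoms3 \<and> z \<in> atoms3 \<and> orth_triple x y z
        \<longrightarrow> f x + f y + f z = C"
    unfolding frame_function_def by blast
  have C: "f x + f y + f z = C" if t: "orth_triple x y z" for x y z
    using C0 triple_atoms[OF t] t by blast
  obtain B where B: "\<And>x. x \<in> atoms3 \<Longrightarrow> \<bar>f x\<bar> \<le> B" using H by blast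
  have fB: "0 \<le> f x + B" if "x \<in> atoms3" for x using B[OF that] by linarith
  define c where "c = C + 3 * B"
  have ctr: "f x + B + (f y + B) + (f z + B) = c" if "orth_triple x y z" for x y z
    using C[OF that] c_def by simp
  show "\<forall>x\<in>atoms3. f x = 0"
  proof (cases "c = 0")
    case True
    have m: "f x = - B" if xa: "x \<in> atoms3" for x
    proof -
      obtain y z where t: "orth_triple x y z" using atom_in_triple[OF xa] by blast
      have a: "x \<in> atoms3" "y \<in> atoms3" "z \<in> atoms3" using triple_atoms[OF t] by auto
      show ?thesis using ctr[OF t] True fB[OF a(1)] fB[OF a(2)] fB[OF a(3)] by linarith
    qed
    have "span{e1} \<in> atoms3" using e_triple triple_atoms by blast
    then have "B = 0" using m H by fastforce
    then show ?thesis using m by simp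
  next
    case False
    have ea: "span{e1} \<in> atoms3" "span{e2} \<in> atoms3" "span{e3} \<in> atoms3"
      using triple_atoms[OF e_triple] by auto
    have "c \<ge> 0" using ctr[OF e_triple] fB[OF ea(1)] fB[OF ea(2)] fB[OF ea(3)] by linarith
    then have cpos: "c > 0" using False by simp
    define P where "P x = (f x + B) / c" for x
    have "is_state P" unfolding is_state_def P_def
    proof (intro conjI ballI allI impI)
      fix x assume "x \<in> atoms3" then show "0 \<le> (f x + B) / c" using fB cpos by simp
    next
      fix x y z assume "orth_triple x y z"
      then show "(f x + B) / c + (f y + B) / c + (f z + B) / c = 1"
        using ctr cpos by (simp add: add_divide_distrib[symmetric])
    qed
    then have "\<exists>W :: real^3^3. transpose W = W \<and> (\<forall>v. 0 \<le> inner v (W *v v)) \<and> trace W = 1 \<and>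
        (\<forall>x\<in>atoms3. \<forall>u. u \<in> x \<and> norm u = 1 \<longrightarrow> P x = inner u (W *v u))"
      by (rule G[unfolded gleason_R3_def, rule_format])
    then obtain W :: "real^3^3" where W0: "\<forall>x\<in>atoms3. \<forall>u. u \<in> x \<and> norm u = 1 \<longrightarrow> P x = inner u (W *v u)"
      by blast
    have W: "P x = Q W u" if "x\<in>atoms3" "u \<in> x" "norm u = 1" for x u
      using W0 that unfolding Q_def by blast
    have fQ: "f x = c * Q W u - B" if "x\<in>atoms3" "u \<in> x" "norm u = 1" for x u
      using W[OF that] cpos unfolding P_def by (simp add: field_simps)
    have at: "span{v} \<in> atoms3" "v \<in> span{v}" if "norm v = 1" for v
    proof -
      have "v \<noteq> 0" using that by auto
      then show "span{v} \<in> atoms3" "v \<in> span{v}" by (simp_all add: atom_span span_base)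
    qed
    have v1: "c * Q W e1 = B" using fQ[OF at norms(1)] H norms by simp
    have v2: "c * Q W e2 = B" using fQ[OF at norms(2)] H norms by simp
    have v3: "c * Q W e3 = B" using fQ[OF at norms(3)] H norms by simp
    have v12: "c * Q W b12 = B" using fQ[OF at norms(4)] H norms by simp
    have v13: "c * Q W b13 = B" using fQ[OF at norms(5)] H norms by simp
    have v23: "c * Q W b23 = B" using fQ[OF at norms(6)] H norms by simp
    have d1: "c * W$1$1 = B" "c * W$2$2 = B" "c * W$3$3 = B" using v1 v2 v3 by (simp_all add: Qe)
    have d2: "c * W$1$2 + c * W$2$1 = 0" "c * W$1$3 + c * W$3$1 = 0" "c * W$2$3 + c * W$3$2 = 0"
      using v12 v13 v23 d1 by (simp_all add: Qb field_simps)
    show ?thesis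
    proof
      fix x assume x: "x \<in> atoms3"
      obtain u where u: "x = span{u}" "norm u = 1" using atom_unit x by blast
      have "c * Q W u = u$1^2 * (c * W$1$1) + u$2^2 * (c * W$2$2) + u$3^2 * (c * W$3$3)
         + u$1 * u$2 * (c * W$1$2 + c * W$2$1) + u$1 * u$3 * (c * W$1$3 + c * W$3$1)
         + u$2 * u$3 * (c * W$2$3 + c * W$3$2)"
        by (simp add: Q_expand sum_3 algebra_simps power2_eq_square)
      also have "\<dots> = B * (u$1^2 + u$2^2 + u$3^2)" by (simp add: d1 d2 algebra_simps)
      also have "\<dots> = B" using unit_eq[OF u(2)] by simp
      finally show "f x = 0" using fQ[OF x _ u(2)] u by (simp add: span_base)
    qed
  qed
qed

lemma dir2: assumes F: frame_vanishing_R3 shows gleason_R3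
  unfolding gleason_R3_def
proof (intro allI impI)
  fix P assume S: "is_state P"
  define p1 where "p1 = P (span{e1})"
  define p2 where "p2 = P (span{e2})"
  define p3 where "p3 = P (span{e3})"
  define q12 where "q12 = P (span{b12}) - (p1 + p2) / 2"
  define q13 where "q13 = P (span{b13}) - (p1 + p3) / 2"
  define q23 where "q23 = P (span{b23}) - (p2 + p3) / 2"
  define W :: "real^3^3" where "W = vector [vector [p1, q12, q13], vector [q12, p2, q23], vector [q13, q23, p3]]"
  have Wc: "W$1$1 = p1" "W$2$2 = p2" "W$3$3 = p3" "W$1$2 = q12" "W$2$1 = q12"
    "W$1$3 = q13" "W$3$1 = q13" "W$2$3 = q23" "W$3$2 = q23"
    by (simp_all add: W_def)
  define f where "f x = P x - Q W (SOME u. u \<in> x \<and> norm u = 1)" for x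
  have fQ: "f x = P x - Q W u" if "x \<in> atoms3" "u \<in> x" "norm u = 1" for x u
  proof -
    have "\<exists>u. u \<in> x \<and> norm u = 1" using that by blast
    then have "(SOME u. u \<in> x \<and> norm u = 1) \<in> x \<and> norm (SOME u. u \<in> x \<and> norm u = 1) = 1"
      by (rule someI_ex)
    then show ?thesis unfolding f_def using Q_atom_indep[OF that(1)] that by metis
  qed
  have at: "span{v} \<in> atoms3" "v \<in> span{v}" if "norm v = 1" for v
  proof -
    have "v \<noteq> 0" using that by auto
    then show "span{v} \<in> atoms3" "v \<in> span{v}" by (simp_all add: atom_span span_base)
  qed
  have tr: "trace W = 1"
  proof -
    have "P (span{e1}) + P (span{e2}) + P (span{e3}) = 1" using S e_triple unfolding is_state_def by blast
    then show ?thesis by (simp add: trace_def sum_3 Wc p1_def p2_def p3_def)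
  qed
  have ff: "frame_function atoms3 f" unfolding frame_function_def
  proof (intro exI[of _ 0] allI impI)
    fix x y z assume "x \<in> atoms3 \<and> y \<in> atoms3 \<and> z \<in> atoms3 \<and> orth_triple x y z"
    then have t: "orth_triple x y z" by blast
    obtain u1 u2 u3 where u: "x = span{u1}" "y = span{u2}" "z = span{u3}" "norm u1 = 1" "norm u2 = 1" "norm u3 = 1"
      "inner u1 u2 = 0" "inner u1 u3 = 0" "inner u2 u3 = 0" using triple_units[OF t] by blast
    have "f x + f y + f z = (P x + P y + P z) - (Q W u1 + Q W u2 + Q W u3)"
      using fQ[OF at(1)[OF u(4)] at(2)[OF u(4)] u(4)] fQ[OF at(1)[OF u(5)] at(2)[OF u(5)] u(5)]
        fQ[OF at(1)[OF u(6)] at(2)[OF u(6)] u(6)] u(1-3) by simp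
    also have "\<dots> = 0" using trace_lemma[OF u(4-9), of W] tr S t unfolding is_state_def by simp
    finally show "f x + f y + f z = 0" .
  qed
  have fb: "\<exists>B. \<forall>x\<in>atoms3. \<bar>f x\<bar> \<le> B"
  proof (intro exI ballI)
    fix x assume x: "x \<in> atoms3"
    obtain u where u: "x = span{u}" "norm u = 1" using atom_unit x by blast
    have "\<bar>f x\<bar> \<le> \<bar>P x\<bar> + \<bar>Q W u\<bar>" using fQ[OF x _ u(2)] u by (simp add: span_base)
    also have "\<dots> \<le> 1 + (\<Sum>i\<in>UNIV. \<Sum>j\<in>UNIV. \<bar>W$i$j\<bar>)"
      using state_le1[OF S x] Q_bound[OF u(2), of W] by simp
    finally show "\<bar>f x\<bar> \<le> 1 + (\<Sum>i\<in>UNIV. \<Sum>j\<in>UNIV. \<bar>W$i$j\<bar>)" .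
  qed
  have z: "f (span {e1}) = 0 \<and> f (span {e2}) = 0 \<and> f (span {e3}) = 0 \<and>
     f (span {b12}) = 0 \<and> f (span {b13}) = 0 \<and> f (span {b23}) = 0"
    using fQ[OF at norms(1)] fQ[OF at norms(2)] fQ[OF at norms(3)]
      fQ[OF at norms(4)] fQ[OF at norms(5)] fQ[OF at norms(6)]
    by (simp add: norms Qe Qb Wc p1_def p2_def p3_def q12_def q13_def q23_def field_simps)
  have f0: "\<And>x. x \<in> atoms3 \<Longrightarrow> f x = 0" using F ff fb z unfolding frame_vanishing_R3_def by blast
  have rep: "P x = Q W u" if "x \<in> atoms3" "u \<in> x" "norm u = 1" for x u
    using f0[OF that(1)] fQ[OF that] by simp
  show "\<exists>W :: real^3^3. transpose W = W \<and> (\<forall>v. 0 \<le> inner v (W *v v)) \<and> trace W = 1 \<and>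
        (\<forall>x\<in>atoms3. \<forall>u. u \<in> x \<and> norm u = 1 \<longrightarrow> P x = inner u (W *v u))"
  proof (intro exI[of _ W] conjI allI ballI impI)
    show "transpose W = W" by (simp add: vec_eq_iff forall_3 transpose_def Wc)
  next
    fix v :: "real^3"
    show "0 \<le> inner v (W *v v)"
    proof (cases "v = 0")
      case True then show ?thesis by simp
    next
      case False
      define u where "u = (1 / norm v) *\<^sub>R v"
      have un: "norm u = 1" using False by (simp add: u_def)
      have "u \<in> span{v}" by (simp add: u_def span_mul span_base)
      then have "P (span{v}) = Q W u" using rep[OF atom_span[OF False]] un by blast
      then have "0 \<le> Q W u" using S atom_span[OF False] unfolding is_state_def by metis
      moreover have "v = norm v *\<^sub>R u" using False by (simp add: u_def)
      moreover have "Q W (norm v *\<^sub>R u) = (norm v)^2 * Q W u" by (rule Q_scale)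
      ultimately have "0 \<le> Q W (norm v *\<^sub>R u)" by simp
      then show ?thesis using \<open>v = norm v *\<^sub>R u\<close> by (simp add: Q_def)
    qed
  next
    show "trace W = 1" by (rule tr)
  next
    fix x u assume "x \<in> atoms3" "u \<in> x \<and> norm u = 1"
    then show "P x = inner u (W *v u)" using rep Q_def by simp
  qed
qed

theorem mainTheorem1:
  shows "gleason_R3 \<longleftrightarrow> frame_vanishing_R3"
  using dir1 dir2 by blast

end
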